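(* Let $\Gamma=(N,A,u)$ be a finite normal form game with $N=\{1,\dots,n\}$, $n\ge2$, in which every player has the same strategy set $X$, so $A=X^n$. The following are equivalent: (i) $\Gamma$ is fully symmetric, i.e. $u_i=u_{\pi(i)}\circ\pi$ for every $i\in N$ and every $\pi\in S_N$; (ii) $\Gamma$ is standard symmetric and weakly anonymous; (iii) for each $i\in N$ and $\pi\in S_N$, $u_{\pi(i)}=u_i\circ\pi^{-1}$; (iv) for each $i\in N$ and each transposition $\tau\in T_N$, $u_i=u_{\tau(i)}\circ\tau$; (v) for each $i\in N$ and each transposition $\tau\in T_N$, $u_i=u_{\tau(i)}\circ\tau^{-1}$.
   Context: A finite normal form game $\Gamma=(N,A,u)$ consists of players $N$, non-empty finite strategy sets $A_i$, profiles $A=\times_{i\in N}A_i$ and utilities $u_i:A\to\mathbb{R}$. For $\pi\in S_N$ and $s\in A$ write $\pi(s)=(s_{\pi^{-1}(i)})_{i\in N}$, and for a function $f:A\to\mathbb{R}$, $f\circ\pi$ denotes $s\mapsto f(\pi(s))$. $T_N$ is the set of transpositions in $S_N$. $\Gamma$ is standard symmetric if there is a transitive subgroup $H\le S_N$ such that $u_i=u_{\pi(i)}\circ\pi$ for all $i\in N$ and $\pi\in H$. $\Gamma$ is weakly anonymous if for each $i\in N$ and each permutation $\pi\in S_N$ fixing $i$, $u_i=u_i\circ\pi$. *)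

theory Defs
  imports Main "HOL-Combinatorics.Combinatorics"
begin

text \<open>Players are N = {1..n}; every player has strategy set X; a profile is an
  extensional function s : N -> X (undefined outside N), so A = X^n.
  Utilities u i : profile -> real for i in N.\<close>

definition players :: "nat \<Rightarrow> nat set" where
  "players n = {1..n}"

definition profiles :: "nat \<Rightarrow> 'x set \<Rightarrow> (nat \<Rightarrow> 'x) set" where
  "profiles n X = PiE (players n) (\<lambda>_. X)"

definition perm_act :: "(nat \<Rightarrow> nat) \<Rightarrow> (nat \<Rightarrow> 'x) \<Rightarrow> (nat \<Rightarrow> 'x)" where
  "perm_act p s = (\<lambda>i. s (inv p i))"

definition sym_perms :: "nat \<Rightarrow> (nat \<Rightarrow> nat) set" where
  "sym_perms n = {p. p permutes players n}"

definition transps :: "nat \<Rightarrow> (nat \<Rightarrow> nat) set" where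
  "transps n = {transpose a b | a b. a \<in> players n \<and> b \<in> players n \<and> a \<noteq> b}"

definition fully_symmetric :: "nat \<Rightarrow> 'x set \<Rightarrow> (nat \<Rightarrow> (nat \<Rightarrow> 'x) \<Rightarrow> real) \<Rightarrow> bool" where
  "fully_symmetric n X u \<longleftrightarrow>
     (\<forall>i\<in>players n. \<forall>p\<in>sym_perms n. \<forall>s\<in>profiles n X. u i s = u (p i) (perm_act p s))"

definition is_subgroup_SN :: "nat \<Rightarrow> (nat \<Rightarrow> nat) set \<Rightarrow> bool" where
  "is_subgroup_SN n H \<longleftrightarrow> H \<subseteq> sym_perms n \<and> id \<in> H \<and>
     (\<forall>p\<in>H. \<forall>q\<in>H. p \<circ> q \<in> H) \<and> (\<forall>p\<in>H. inv p \<in> H)"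

definition transitive_on_players :: "nat \<Rightarrow> (nat \<Rightarrow> nat) set \<Rightarrow> bool" where
  "transitive_on_players n H \<longleftrightarrow> (\<forall>i\<in>players n. \<forall>j\<in>players n. \<exists>p\<in>H. p i = j)"

definition standard_symmetric :: "nat \<Rightarrow> 'x set \<Rightarrow> (nat \<Rightarrow> (nat \<Rightarrow> 'x) \<Rightarrow> real) \<Rightarrow> bool" where
  "standard_symmetric n X u \<longleftrightarrow>
     (\<exists>H. is_subgroup_SN n H \<and> transitive_on_players n H \<and>
        (\<forall>i\<in>players n. \<forall>p\<in>H. \<forall>s\<in>profiles n X. u i s = u (p i) (perm_act p s)))"

definition weakly_anonymous :: "nat \<Rightarrow> 'x set \<Rightarrow> (nat \<Rightarrow> (nat \<Rightarrow> 'x) \<Rightarrow> real) \<Rightarrow> bool" where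
  "weakly_anonymous n X u \<longleftrightarrow>
     (\<forall>i\<in>players n. \<forall>p\<in>sym_perms n. p i = i \<longrightarrow>
        (\<forall>s\<in>profiles n X. u i s = u i (perm_act p s)))"

end

theory Submission
  imports Defs
begin

lemma perm_act_prof:
  assumes "p permutes players n" "s \<in> profiles n X"
  shows "perm_act p s \<in> profiles n X"
proof -
  have ip: "inv p permutes players n" using assms(1) by (rule permutes_inv)
  show ?thesis using assms(2) unfolding profiles_def perm_act_def PiE_def Pi_def extensional_def
    using ip permutes_in_image[OF ip] permutes_not_in[OF ip] by auto
qed

lemma perm_act_comp:
  assumes "p permutes S" "q permutes S"
  shows "perm_act p (perm_act q s) = perm_act (p \<circ> q) s"
proof -
  have "inv (p \<circ> q) = inv q \<circ> inv p"
    using assms permutes_bij o_inv_distrib by blast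
  thus ?thesis unfolding perm_act_def by auto
qed

lemma perm_act_id: "perm_act id s = s"
  unfolding perm_act_def by auto

definition Good :: "nat \<Rightarrow> 'x set \<Rightarrow> (nat \<Rightarrow> (nat \<Rightarrow> 'x) \<Rightarrow> real) \<Rightarrow> (nat \<Rightarrow> nat) \<Rightarrow> bool" where
  "Good n X u p \<longleftrightarrow> (\<forall>i\<in>players n. \<forall>s\<in>profiles n X. u i s = u (p i) (perm_act p s))"

lemma Good_comp:
  assumes "p permutes players n" "q permutes players n" "Good n X u p" "Good n X u q"
  shows "Good n X u (p \<circ> q)"
  unfolding Good_def
proof (intro ballI)
  fix i s assume i: "i \<in> players n" and s: "s \<in> profiles n X"
  have qi: "q i \<in> players n" using permutes_in_image[OF assms(2)] i by simp
  have qs: "perm_act q s \<in> profiles n X" using perm_act_prof[OF assms(2) s] .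
  have "u i s = u (q i) (perm_act q s)" using assms(4) i s unfolding Good_def by blast
  also have "\<dots> = u (p (q i)) (perm_act p (perm_act q s))"
    using assms(3) qi qs unfolding Good_def by blast
  also have "\<dots> = u (p (q i)) (perm_act (p \<circ> q) s)"
    using perm_act_comp[OF assms(1,2)] by metis
  finally show "u i s = u ((p \<circ> q) i) (perm_act (p \<circ> q) s)"
    by simp
qed

lemma transpose_permutes: "a \<in> S \<Longrightarrow> b \<in> S \<Longrightarrow> transpose a b permutes S"
  by (simp add: permutes_swap_id)

theorem theorem3p15:
  fixes n :: nat and X :: "'x set" and u :: "nat \<Rightarrow> (nat \<Rightarrow> 'x) \<Rightarrow> real"
  assumes "n \<ge> 2" and "finite X" and "X \<noteq> {}"
  defines "c1 \<equiv> fully_symmetric n X u"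
      and "c2 \<equiv> standard_symmetric n X u \<and> weakly_anonymous n X u"
      and "c3 \<equiv> (\<forall>i\<in>players n. \<forall>p\<in>sym_perms n. \<forall>s\<in>profiles n X.
                   u (p i) s = u i (perm_act (inv p) s))"
      and "c4 \<equiv> (\<forall>i\<in>players n. \<forall>t\<in>transps n. \<forall>s\<in>profiles n X.
                   u i s = u (t i) (perm_act t s))"
      and "c5 \<equiv> (\<forall>i\<in>players n. \<forall>t\<in>transps n. \<forall>s\<in>profiles n X.
                   u i s = u (t i) (perm_act (inv t) s))"
  shows "(c1 \<longleftrightarrow> c2) \<and> (c1 \<longleftrightarrow> c3) \<and> (c1 \<longleftrightarrow> c4) \<and> (c1 \<longleftrightarrow> c5)"
proof -
  have fin: "finite (players n)" unfolding players_def by simp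
  have c1G: "c1 \<longleftrightarrow> (\<forall>p. p permutes players n \<longrightarrow> Good n X u p)"
    unfolding c1_def fully_symmetric_def Good_def sym_perms_def by blast
  have c4G: "c4 \<longleftrightarrow> (\<forall>a\<in>players n. \<forall>b\<in>players n. a \<noteq> b \<longrightarrow> Good n X u (transpose a b))"
    unfolding c4_def Good_def transps_def by blast
  have c45: "c4 \<longleftrightarrow> c5"
  proof -
    have eq: "t \<in> transps n \<Longrightarrow> inv t = t" for t
      unfolding transps_def by (auto simp: inv_unique_comp)
    have "(\<forall>i\<in>players n. \<forall>t\<in>transps n. \<forall>s\<in>profiles n X. u i s = u (t i) (perm_act t s))
      \<longleftrightarrow> (\<forall>i\<in>players n. \<forall>t\<in>transps n. \<forall>s\<in>profiles n X. u i s = u (t i) (perm_act (inv t) s))"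
    proof (rule ball_cong[OF refl], rule ball_cong[OF refl])
      fix i t assume "t \<in> transps n"
      hence "inv t = t" by (rule eq)
      thus "(\<forall>s\<in>profiles n X. u i s = u (t i) (perm_act t s)) =
            (\<forall>s\<in>profiles n X. u i s = u (t i) (perm_act (inv t) s))" by (simp only:)
    qed
    thus ?thesis unfolding c4_def c5_def .
  qed
  have c14: "c1 \<longleftrightarrow> c4"
  proof
    assume h: c1
    show c4 unfolding c4G
    proof (intro ballI impI)
      fix a b assume "a \<in> players n" "b \<in> players n"
      hence "transpose a b permutes players n" by (rule transpose_permutes)
      thus "Good n X u (transpose a b)" using h unfolding c1G by blast
    qed
  next
    assume c4
    have "Good n X u p" if "p permutes players n" for p
      using that fin
    proof (induction rule: permutes_induct)
      case id
      then show ?case unfolding Good_def by (simp add: perm_act_id)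
    next
      case (swap a b p)
      have "Good n X u (transpose a b)" using \<open>c4\<close> swap(1,2,3) unfolding c4G by blast
      then show ?case using Good_comp[OF transpose_permutes[OF swap(1,2)] swap(4) _ swap(5)] by blast
    qed
    thus c1 unfolding c1G by blast
  qed
  have c13: "c1 \<longleftrightarrow> c3"
  proof
    assume h: c1
    show c3 unfolding c3_def
    proof (intro ballI)
      fix i p s assume i: "i \<in> players n" and p: "p \<in> sym_perms n" and s: "s \<in> profiles n X"
      have pp: "p permutes players n" using p unfolding sym_perms_def by simp
      have ip: "inv p permutes players n" using permutes_inv[OF pp] .
      have "u i (perm_act (inv p) s) = u (p i) (perm_act p (perm_act (inv p) s))"
        using h i p perm_act_prof[OF ip s] unfolding c1_def fully_symmetric_def by blast
      also have "perm_act p (perm_act (inv p) s) = s"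
        using perm_act_comp[OF pp ip] permutes_inv_o(1)[OF pp] perm_act_id by metis
      finally show "u (p i) s = u i (perm_act (inv p) s)" by simp
    qed
  next
    assume h: c3
    show c1 unfolding c1_def fully_symmetric_def
    proof (intro ballI)
      fix i p s assume i: "i \<in> players n" and p: "p \<in> sym_perms n" and s: "s \<in> profiles n X"
      have pp: "p permutes players n" using p unfolding sym_perms_def by simp
      have ip: "inv p permutes players n" using permutes_inv[OF pp] .
      have "u (p i) (perm_act p s) = u i (perm_act (inv p) (perm_act p s))"
        using h i p perm_act_prof[OF pp s] unfolding c3_def by blast
      also have "perm_act (inv p) (perm_act p s) = s"
        using perm_act_comp[OF ip pp] permutes_inv_o(2)[OF pp] perm_act_id by metis
      finally show "u i s = u (p i) (perm_act p s)" by simp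
    qed
  qed
  have c12: "c1 \<longleftrightarrow> c2"
  proof
    assume h: c1
    have sub: "is_subgroup_SN n (sym_perms n)"
      unfolding is_subgroup_SN_def sym_perms_def
      by (auto simp: permutes_id permutes_compose permutes_inv)
    have tr: "transitive_on_players n (sym_perms n)"
      unfolding transitive_on_players_def sym_perms_def
      using transpose_permutes by (metis mem_Collect_eq transpose_apply_first)
    have "standard_symmetric n X u"
      unfolding standard_symmetric_def using sub tr h unfolding c1_def fully_symmetric_def by blast
    moreover have "weakly_anonymous n X u"
      unfolding weakly_anonymous_def using h unfolding c1_def fully_symmetric_def by metis
    ultimately show c2 unfolding c2_def by simp
  next
    assume c2
    then obtain H where sub: "is_subgroup_SN n H" and tr: "transitive_on_players n H"
      and HH: "\<forall>i\<in>players n. \<forall>p\<in>H. \<forall>s\<in>profiles n X. u i s = u (p i) (perm_act p s)"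
      and wa: "weakly_anonymous n X u"
      unfolding c2_def standard_symmetric_def by blast
    show c1 unfolding c1_def fully_symmetric_def
    proof (intro ballI)
      fix i p s assume i: "i \<in> players n" and p: "p \<in> sym_perms n" and s: "s \<in> profiles n X"
      have pp: "p permutes players n" using p unfolding sym_perms_def by simp
      have pi: "p i \<in> players n" using permutes_in_image[OF pp] i by simp
      obtain h where hH: "h \<in> H" and hi: "h i = p i" using tr i pi unfolding transitive_on_players_def by blast
      have hp: "h permutes players n" using sub hH unfolding is_subgroup_SN_def sym_perms_def by blast
      define q where "q = inv h \<circ> p"
      have qp: "q permutes players n" unfolding q_def using permutes_compose[OF pp permutes_inv[OF hp]] .
      have qi: "q i = i" unfolding q_def using hi permutes_inverses(2)[OF hp] by (metis comp_apply)
      have hq: "h \<circ> q = p" unfolding q_def using permutes_inv_o(1)[OF hp] by (simp add: o_assoc)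
      have "u i s = u i (perm_act q s)"
        using wa i qp qi s unfolding weakly_anonymous_def sym_perms_def by blast
      also have "\<dots> = u (h i) (perm_act h (perm_act q s))"
        using HH i perm_act_prof[OF qp s] \<open>h \<in> H\<close> by blast
      also have "\<dots> = u (p i) (perm_act p s)"
        using perm_act_comp[OF hp qp, of s] hq hi by simp
      finally show "u i s = u (p i) (perm_act p s)" .
    qed
  qed
  show ?thesis using c12 c13 c14 c45 by blast
qed

end
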